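(* Let $\mathcal M=(S,L,\tau,\ell)$ be an LMC (possibly with infinitely many states) and $s,t\in S$ with $d(s,t)<1$. Then there exists a policy $T$ such that for every $\varepsilon>0$ there is $(u,v)\in S^2$ with $d(u,v)\le\varepsilon$ and $\mathcal R^T_{\mathcal M}((s,t),\{(u,v)\})>0$.
   Context: An LMC $\mathcal M=(S,L,\tau,\ell)$ has a nonempty countable state set $S$, finite label set $L$, finitely-branching transition function $\tau:S\to\mathrm{Distr}(S)$ and labelling $\ell$. The probabilistic bisimilarity distance $d$ is the least fixed point of $\Delta(e)(s,t)=1$ if $\ell(s)\ne\ell(t)$ and $\Delta(e)(s,t)=\min_{\omega\in\Omega(\tau(s),\tau(t))}\sum_{u,v}\omega(u,v)e(u,v)$ otherwise, where $\Omega(\mu,\nu)$ is the set of couplings (distributions on $S\times S$ with marginals $\mu,\nu$). Probabilistic bisimilarity $\sim$ is the largest equivalence $R$ on $S$ such that $(s,t)\in R$ implies $\ell(s)=\ell(t)$ and $\tau(s)(E)=\tau(t)(E)$ for every $R$-class $E$. Partition $S^2$ into $S^2_0=\{(s,t):s\sim t\}$, $S^2_1=\{(s,t):\ell(s)\ne\ell(t)\}$, $S^2_?=S^2\setminus(S^2_0\cup S^2_1)$. A policy is a map $T:S^2_?\to\mathrm{Distr}(S^2)$ with $T(s,t)\in\Omega(\tau(s),\tau(t))$. The Markov chain $\mathcal C^T_{\mathcal M}$ on $S^2$ has every pair in $S^2_0\cup S^2_1$ absorbing and from $(u,v)\in S^2_?$ moves to $(x,y)$ with probability $T(u,v)(x,y)$.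 $\mathcal R^T_{\mathcal M}((s,t),Z)$ is the probability that $\mathcal C^T_{\mathcal M}$ started in $(s,t)$ reaches $Z\subseteq S^2$. *)

theory Defs
  imports "HOL-Probability.Probability"
begin

text \<open>Labelled Markov chains. The state set S is the (countable, nonempty) type 's;
  L is the finite label set, tau the transition function, ell the labelling.\<close>

definition is_LMC :: "'l set \<Rightarrow> ('s::countable \<Rightarrow> 's pmf) \<Rightarrow> ('s \<Rightarrow> 'l) \<Rightarrow> bool" where
  "is_LMC L \<tau> lab \<longleftrightarrow> finite L \<and> (\<forall>s. lab s \<in> L) \<and> (\<forall>s. finite (set_pmf (\<tau> s)))"

definition couplings :: "'s pmf \<Rightarrow> 's pmf \<Rightarrow> ('s \<times> 's) pmf set" where
  "couplings \<mu> \<nu> = {\<omega>. map_pmf fst \<omega> = \<mu> \<and> map_pmf snd \<omega> = \<nu>}"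

definition Delta :: "('s \<Rightarrow> 's pmf) \<Rightarrow> ('s \<Rightarrow> 'l) \<Rightarrow> ('s \<Rightarrow> 's \<Rightarrow> real) \<Rightarrow> 's \<Rightarrow> 's \<Rightarrow> real" where
  "Delta \<tau> lab e s t =
     (if lab s \<noteq> lab t then 1
      else (INF \<omega> \<in> couplings (\<tau> s) (\<tau> t). measure_pmf.expectation \<omega> (\<lambda>(u, v). e u v)))"

text \<open>The probabilistic bisimilarity distance: the least fixed point of Delta on
  [0,1]-valued functions, i.e. the pointwise infimum of all such fixed points.\<close>
definition bisim_dist :: "('s \<Rightarrow> 's pmf) \<Rightarrow> ('s \<Rightarrow> 'l) \<Rightarrow> 's \<Rightarrow> 's \<Rightarrow> real" where
  "bisim_dist \<tau> lab s t =
     (INF e \<in> {e. Delta \<tau> lab e = e \<and> (\<forall>u v. 0 \<le> e u v \<and> e u v \<le> 1)}. e s t)"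

definition prob_bisimulation :: "('s \<Rightarrow> 's pmf) \<Rightarrow> ('s \<Rightarrow> 'l) \<Rightarrow> ('s \<times> 's) set \<Rightarrow> bool" where
  "prob_bisimulation \<tau> lab R \<longleftrightarrow> equiv UNIV R \<and>
     (\<forall>(s, t) \<in> R. lab s = lab t \<and> (\<forall>E \<in> UNIV // R. measure_pmf.prob (\<tau> s) E = measure_pmf.prob (\<tau> t) E))"

definition bisimilar :: "('s \<Rightarrow> 's pmf) \<Rightarrow> ('s \<Rightarrow> 'l) \<Rightarrow> 's \<Rightarrow> 's \<Rightarrow> bool" where
  "bisimilar \<tau> lab s t \<longleftrightarrow> (\<exists>R. prob_bisimulation \<tau> lab R \<and> (s, t) \<in> R)"

definition unknown_pairs :: "('s \<Rightarrow> 's pmf) \<Rightarrow> ('s \<Rightarrow> 'l) \<Rightarrow> ('s \<times> 's) set" where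
  "unknown_pairs \<tau> lab = {(s, t). \<not> bisimilar \<tau> lab s t \<and> lab s = lab t}"

definition is_policy :: "('s \<Rightarrow> 's pmf) \<Rightarrow> ('s \<Rightarrow> 'l) \<Rightarrow> ('s \<times> 's \<Rightarrow> ('s \<times> 's) pmf) \<Rightarrow> bool" where
  "is_policy \<tau> lab T \<longleftrightarrow> (\<forall>(s, t) \<in> unknown_pairs \<tau> lab. T (s, t) \<in> couplings (\<tau> s) (\<tau> t))"

definition chain_step :: "('s \<Rightarrow> 's pmf) \<Rightarrow> ('s \<Rightarrow> 'l) \<Rightarrow> ('s \<times> 's \<Rightarrow> ('s \<times> 's) pmf) \<Rightarrow> 's \<times> 's \<Rightarrow> ('s \<times> 's) pmf" where
  "chain_step \<tau> lab T x = (if x \<in> unknown_pairs \<tau> lab then T x else return_pmf x)"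

fun reach_within :: "('s \<Rightarrow> 's pmf) \<Rightarrow> ('s \<Rightarrow> 'l) \<Rightarrow> ('s \<times> 's \<Rightarrow> ('s \<times> 's) pmf) \<Rightarrow> ('s \<times> 's) set \<Rightarrow> nat \<Rightarrow> 's \<times> 's \<Rightarrow> real" where
  "reach_within \<tau> lab T Z 0 x = (if x \<in> Z then 1 else 0)"
| "reach_within \<tau> lab T Z (Suc n) x =
     (if x \<in> Z then 1 else measure_pmf.expectation (chain_step \<tau> lab T x) (reach_within \<tau> lab T Z n))"

text \<open>Probability that the chain started in x eventually reaches Z (limit of the increasing
  sequence of bounded-horizon reachability probabilities).\<close>
definition reach_prob :: "('s \<Rightarrow> 's pmf) \<Rightarrow> ('s \<Rightarrow> 'l) \<Rightarrow> ('s \<times> 's \<Rightarrow> ('s \<times> 's) pmf) \<Rightarrow> 's \<times> 's \<Rightarrow> ('s \<times> 's) set \<Rightarrow> real" where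
  "reach_prob \<tau> lab T x Z = (SUP n. reach_within \<tau> lab T Z n x)"

end

theory Submission
  imports Defs
begin

lemma coup_set:
  assumes "\<omega> \<in> couplings \<mu> \<nu>"
  shows "set_pmf \<omega> \<subseteq> set_pmf \<mu> \<times> set_pmf \<nu>"
proof
  fix p assume p: "p \<in> set_pmf \<omega>"
  have "set_pmf \<mu> = fst ` set_pmf \<omega>" "set_pmf \<nu> = snd ` set_pmf \<omega>"
    using assms unfolding couplings_def by (auto simp only: set_map_pmf mem_Collect_eq)
  then show "p \<in> set_pmf \<mu> \<times> set_pmf \<nu>" using p by (metis (no_types) mem_Times_iff image_eqI)
qed

lemma pair_coup: "pair_pmf \<mu> \<nu> \<in> couplings \<mu> \<nu>"
  by (simp add: couplings_def map_fst_pair_pmf map_snd_pair_pmf)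

lemma marg_fst:
  assumes "finite B" "set_pmf \<omega> \<subseteq> A \<times> B"
  shows "pmf (map_pmf fst \<omega>) a = (\<Sum>b\<in>B. pmf \<omega> (a, b))"
proof -
  have "pmf (map_pmf fst \<omega>) a = measure \<omega> (fst -` {a})" by (simp add: pmf_map)
  also have "\<dots> = measure \<omega> (fst -` {a} \<inter> set_pmf \<omega>)" by (simp add: measure_Int_set_pmf)
  also have "fst -` {a} \<inter> set_pmf \<omega> = ({a} \<times> B) \<inter> set_pmf \<omega>" using assms by auto
  also have "measure \<omega> \<dots> = measure \<omega> ({a} \<times> B)" by (simp add: measure_Int_set_pmf)
  also have "\<dots> = sum (pmf \<omega>) ({a} \<times> B)" using assms by (simp add: measure_measure_pmf_finite)
  also have "\<dots> = (\<Sum>b\<in>B. pmf \<omega> (a, b))"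
  proof -
    have "{a} \<times> B = Pair a ` B" by auto
    then show ?thesis by (simp add: sum.reindex inj_on_def)
  qed
  finally show ?thesis .
qed

lemma marg_snd:
  assumes "finite A" "set_pmf \<omega> \<subseteq> A \<times> B"
  shows "pmf (map_pmf snd \<omega>) b = (\<Sum>a\<in>A. pmf \<omega> (a, b))"
proof -
  have "pmf (map_pmf snd \<omega>) b = measure \<omega> (snd -` {b})" by (simp add: pmf_map)
  also have "\<dots> = measure \<omega> (snd -` {b} \<inter> set_pmf \<omega>)" by (simp add: measure_Int_set_pmf)
  also have "snd -` {b} \<inter> set_pmf \<omega> = (A \<times> {b}) \<inter> set_pmf \<omega>" using assms by auto
  also have "measure \<omega> \<dots> = measure \<omega> (A \<times> {b})" by (simp add: measure_Int_set_pmf)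
  also have "\<dots> = sum (pmf \<omega>) (A \<times> {b})" using assms by (simp add: measure_measure_pmf_finite)
  also have "\<dots> = (\<Sum>a\<in>A. pmf \<omega> (a, b))"
  proof -
    have "A \<times> {b} = (\<lambda>a. (a, b)) ` A" by auto
    then show ?thesis by (simp add: sum.reindex inj_on_def)
  qed
  finally show ?thesis .
qed

lemma exp_sum:
  assumes "finite A" "set_pmf \<omega> \<subseteq> A"
  shows "measure_pmf.expectation \<omega> f = (\<Sum>p\<in>A. f p * pmf \<omega> p)"
  using assms by (subst integral_measure_pmf_real[of A]) auto


lemma coup_min:
  fixes f :: "'s \<times> 's \<Rightarrow> real"
  assumes finA: "finite (set_pmf \<mu>)" and finB: "finite (set_pmf \<nu>)"
  shows "\<exists>\<omega>\<in>couplings \<mu> \<nu>. \<forall>\<omega>'\<in>couplings \<mu> \<nu>.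
           measure_pmf.expectation \<omega> f \<le> measure_pmf.expectation \<omega>' f"
proof -
  define A where "A = set_pmf \<mu>"
  define B where "B = set_pmf \<nu>"
  have fA: "finite A" and fB: "finite B" using assms by (auto simp: A_def B_def)
  have fAB: "finite (A \<times> B)" using fA fB by simp
  define X where "X = (\<lambda>p::'s\<times>'s. if p \<in> A \<times> B then {0..1::real} else {0})"
  define K where "K = Pi\<^sub>E UNIV X"
  have "compactin (product_topology (\<lambda>_. euclidean) UNIV) K"
    unfolding K_def by (subst compactin_PiE) (auto simp: X_def)
  then have cK: "compact K" by (simp add: euclidean_product_topology)
  define C1 where "C1 = (\<Inter>a. {g::'s\<times>'s\<Rightarrow>real. (\<Sum>b\<in>B. g (a, b)) = pmf \<mu> a})"
  define C2 where "C2 = (\<Inter>b. {g::'s\<times>'s\<Rightarrow>real. (\<Sum>a\<in>A. g (a, b)) = pmf \<nu> b})"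
  have "closed {g::'s\<times>'s\<Rightarrow>real. (\<Sum>b\<in>B. g (a, b)) = pmf \<mu> a}" for a
    by (rule closed_Collect_eq) (intro continuous_on_sum continuous_on_const continuous_on_product_coordinates)+
  then have "closed C1" unfolding C1_def by (intro closed_INT) auto
  have "closed {g::'s\<times>'s\<Rightarrow>real. (\<Sum>a\<in>A. g (a, b)) = pmf \<nu> b}" for b
    by (rule closed_Collect_eq) (intro continuous_on_sum continuous_on_const continuous_on_product_coordinates)+
  then have "closed C2" unfolding C2_def by (intro closed_INT) auto
  have cC: "compact (K \<inter> C1 \<inter> C2)" using cK \<open>closed C1\<close> \<open>closed C2\<close> by (intro closed_Int compact_Int_closed)
  define F where "F = (\<lambda>g::'s\<times>'s\<Rightarrow>real. \<Sum>p\<in>A \<times> B. f p * g p)"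
  have contF: "continuous_on S F" for S unfolding F_def
    by (intro continuous_on_sum continuous_on_mult continuous_on_const)
       (auto intro: continuous_on_subset[OF continuous_on_product_coordinates])
  have toC: "pmf \<omega> \<in> K \<inter> C1 \<inter> C2" and toF: "measure_pmf.expectation \<omega> f = F (pmf \<omega>)"
    if w: "\<omega> \<in> couplings \<mu> \<nu>" for \<omega>
  proof -
    have sub: "set_pmf \<omega> \<subseteq> A \<times> B" using coup_set[OF w] by (simp add: A_def B_def)
    have "pmf \<omega> \<in> K" unfolding K_def X_def
      using sub by (auto simp: pmf_le_1 set_pmf_eq)
    moreover have "pmf \<omega> \<in> C1" unfolding C1_def
      using marg_fst[OF fB sub] w by (auto simp: couplings_def)
    moreover have "pmf \<omega> \<in> C2" unfolding C2_def
      using marg_snd[OF fA sub] w by (auto simp: couplings_def)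
    ultimately show "pmf \<omega> \<in> K \<inter> C1 \<inter> C2" by blast
    show "measure_pmf.expectation \<omega> f = F (pmf \<omega>)"
      unfolding F_def by (rule exp_sum[OF fAB sub])
  qed
  have ne: "K \<inter> C1 \<inter> C2 \<noteq> {}" using toC[OF pair_coup] by blast
  obtain g where g: "g \<in> K \<inter> C1 \<inter> C2" and gmin: "\<And>h. h \<in> K \<inter> C1 \<inter> C2 \<Longrightarrow> F g \<le> F h"
    using continuous_attains_inf[OF cC ne contF] by blast
  have gK: "\<And>p. g p \<in> X p" using g unfolding K_def by auto
  have g0: "0 \<le> g p" for p using gK[of p] by (auto simp: X_def split: if_splits)
  have gout: "p \<notin> A \<times> B \<Longrightarrow> g p = 0" for p using gK[of p] by (auto simp: X_def split: if_splits)
  have gC1: "\<And>a. (\<Sum>b\<in>B. g (a, b)) = pmf \<mu> a" using g unfolding C1_def by auto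
  have gC2: "\<And>b. (\<Sum>a\<in>A. g (a, b)) = pmf \<nu> b" using g unfolding C2_def by auto
  have "(\<Sum>p\<in>A \<times> B. g p) = (\<Sum>a\<in>A. \<Sum>b\<in>B. g (a, b))" by (simp add: sum.cartesian_product)
  also have "\<dots> = (\<Sum>a\<in>A. pmf \<mu> a)" by (simp add: gC1)
  also have "\<dots> = 1" using fA by (simp add: A_def sum_pmf_eq_1)
  finally have gsum: "(\<Sum>p\<in>A \<times> B. g p) = 1" .
  have nn: "(\<integral>\<^sup>+x. ennreal (g x) \<partial>count_space UNIV) = 1"
    by (subst nn_integral_count_space'[OF fAB]) (auto simp: gout g0 gsum)
  define \<omega> where "\<omega> = embed_pmf g"
  have pw: "pmf \<omega> = g" unfolding \<omega>_def using g0 nn by (intro ext pmf_embed_pmf) auto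
  have sw: "set_pmf \<omega> \<subseteq> A \<times> B" using gout by (force simp: set_pmf_iff pw)
  have "map_pmf fst \<omega> = \<mu>"
    by (rule pmf_eqI) (simp add: marg_fst[OF fB sw] pw gC1)
  moreover have "map_pmf snd \<omega> = \<nu>"
    by (rule pmf_eqI) (simp add: marg_snd[OF fA sw] pw gC2)
  ultimately have wc: "\<omega> \<in> couplings \<mu> \<nu>" by (simp add: couplings_def)
  have "measure_pmf.expectation \<omega> f = F g" using toF[OF wc] by (simp add: pw)
  then show ?thesis using wc gmin toC toF by (metis (no_types, lifting))
qed


definition bnd :: "('s \<Rightarrow> 's \<Rightarrow> real) \<Rightarrow> bool" where
  "bnd e \<longleftrightarrow> (\<forall>u v. 0 \<le> e u v \<and> e u v \<le> 1)"

locale lmc =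
  fixes \<tau> :: "'s::countable \<Rightarrow> 's pmf" and lab :: "'s \<Rightarrow> 'l"
  assumes fin: "\<And>s. finite (set_pmf (\<tau> s))"
begin

abbreviation "D \<equiv> Delta \<tau> lab"
abbreviation "d \<equiv> bisim_dist \<tau> lab"
abbreviation "EE \<omega> e \<equiv> measure_pmf.expectation \<omega> (\<lambda>(u, v). e u v)"

lemma coup_fin: "\<omega> \<in> couplings (\<tau> s) (\<tau> t) \<Longrightarrow> finite (set_pmf \<omega>)"
  using coup_set[of \<omega>] fin by (meson finite_SigmaI finite_subset)

lemma exp_bnd:
  assumes "bnd e" "\<omega> \<in> couplings (\<tau> s) (\<tau> t)"
  shows "0 \<le> EE \<omega> e" "EE \<omega> e \<le> 1"
proof -
  show "0 \<le> EE \<omega> e" using assms(1) by (auto simp: bnd_def intro!: integral_nonneg_AE split: prod.splits)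
  have "EE \<omega> e \<le> measure_pmf.expectation \<omega> (\<lambda>_. 1::real)"
    using assms by (intro integral_mono integrable_measure_pmf_finite coup_fin)
       (auto simp: bnd_def split: prod.splits)
  then show "EE \<omega> e \<le> 1" by simp
qed

lemma coup_ne: "couplings (\<tau> s) (\<tau> t) \<noteq> {}" using pair_coup by blast

lemma bdd_exp: "bnd e \<Longrightarrow> bdd_below ((\<lambda>\<omega>. EE \<omega> e) ` couplings (\<tau> s) (\<tau> t))"
  using exp_bnd by (meson bdd_belowI2)

lemma Delta_le:
  assumes "bnd e" "\<omega> \<in> couplings (\<tau> s) (\<tau> t)" "lab s = lab t"
  shows "D e s t \<le> EE \<omega> e"
  using assms unfolding Delta_def by (simp add: cINF_lower[OF bdd_exp[OF assms(1)]])

lemma Delta_bnd: assumes "bnd e" shows "bnd (D e)"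
  unfolding bnd_def
proof (intro allI conjI)
  fix s t
  show "0 \<le> D e s t" unfolding Delta_def
    using assms exp_bnd coup_ne by (auto intro!: cINF_greatest)
  show "D e s t \<le> 1"
  proof (cases "lab s = lab t")
    case True
    have "D e s t \<le> EE (pair_pmf (\<tau> s) (\<tau> t)) e" using Delta_le[OF assms pair_coup True] .
    also have "\<dots> \<le> 1" using exp_bnd(2)[OF assms pair_coup] .
    finally show ?thesis .
  qed (simp add: Delta_def)
qed

lemma Delta_mono:
  assumes "bnd e" "bnd e'" "\<And>u v. e u v \<le> e' u v"
  shows "D e s t \<le> D e' s t"
proof (cases "lab s = lab t")
  case True
  show ?thesis unfolding Delta_def using True
    apply simp
    apply (rule cINF_mono[OF coup_ne bdd_exp[OF assms(1)]])
    apply (rule bexI[of _ _], rule integral_mono)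
    using assms coup_fin by (auto intro!: integrable_measure_pmf_finite split: prod.splits)
qed (simp add: Delta_def)

lemma Delta_attain:
  assumes "bnd e" "lab s = lab t"
  shows "\<exists>\<omega>\<in>couplings (\<tau> s) (\<tau> t). D e s t = EE \<omega> e"
proof -
  obtain \<omega> where w: "\<omega> \<in> couplings (\<tau> s) (\<tau> t)"
    and m: "\<And>\<omega>'. \<omega>' \<in> couplings (\<tau> s) (\<tau> t) \<Longrightarrow> EE \<omega> e \<le> EE \<omega>' e"
    using coup_min[OF fin fin, of s t "\<lambda>(u, v). e u v"] by blast
  have "D e s t = EE \<omega> e"
    unfolding Delta_def using assms(2)
    by (simp, intro antisym cINF_lower bdd_exp[OF assms(1)] w cINF_greatest coup_ne m)
  then show ?thesis using w by blast
qed

definition "P = {e. bnd e \<and> (\<forall>u v. D e u v \<le> e u v)}"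
definition "lf u v = (INF e\<in>P. e u v)"

lemma one_P: "(\<lambda>_ _. 1) \<in> P"
  unfolding P_def bnd_def using Delta_bnd[of "\<lambda>_ _. 1"] by (auto simp: bnd_def)

lemma bdd_P: "bdd_below ((\<lambda>e. e u v) ` P)"
  by (rule bdd_belowI2[of _ 0]) (auto simp: P_def bnd_def)

lemma lf_le: "e \<in> P \<Longrightarrow> lf u v \<le> e u v"
  unfolding lf_def by (rule cINF_lower[OF bdd_P])

lemma lf_bnd: "bnd lf"
  unfolding bnd_def
proof (intro allI conjI)
  fix u v
  have "P \<noteq> {}" using one_P by blast
  then show "0 \<le> lf u v" unfolding lf_def
    by (rule cINF_greatest) (auto simp: P_def bnd_def)
  show "lf u v \<le> 1" using lf_le[OF one_P] by simp
qed

lemma lf_pre: "D lf u v \<le> lf u v"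
  unfolding lf_def[of u v]
proof (rule cINF_greatest)
  show "P \<noteq> {}" using one_P by blast
  fix e assume e: "e \<in> P"
  have "D lf u v \<le> D e u v" using e lf_bnd lf_le by (intro Delta_mono) (auto simp: P_def)
  also have "\<dots> \<le> e u v" using e by (auto simp: P_def)
  finally show "D lf u v \<le> e u v" .
qed

lemma lf_fix: "D lf = lf"
proof -
  have "D lf \<in> P" unfolding P_def
    using Delta_bnd[OF lf_bnd] lf_pre by (auto intro!: Delta_mono Delta_bnd lf_bnd)
  then have "lf u v \<le> D lf u v" for u v by (rule lf_le)
  then show ?thesis using lf_pre by (intro ext antisym) auto
qed

lemma d_eq: "d = lf"
proof (intro ext)
  fix u v
  let ?F = "{e. D e = e \<and> (\<forall>u v. 0 \<le> e u v \<and> e u v \<le> 1)}"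
  have lfF: "lf \<in> ?F" using lf_fix lf_bnd by (auto simp: bnd_def)
  have "?F \<subseteq> P" by (auto simp: P_def bnd_def)
  then have low: "e \<in> ?F \<Longrightarrow> lf u v \<le> e u v" for e using lf_le by blast
  show "d u v = lf u v" unfolding bisim_dist_def
    by (intro antisym cINF_lower lfF cINF_greatest low) (use lfF in \<open>auto intro: bdd_belowI2[of _ "lf u v"] low\<close>)
qed

lemma d_fix: "D d = d" using d_eq lf_fix by simp
lemma d_bnd: "bnd d" using d_eq lf_bnd by simp
lemma d_least: "bnd e \<Longrightarrow> (\<And>u v. D e u v \<le> e u v) \<Longrightarrow> d u v \<le> e u v"
  using d_eq lf_le by (auto simp: P_def)

lemma d_lab: "lab u \<noteq> lab v \<Longrightarrow> d u v = 1"
  using fun_cong[OF fun_cong[OF d_fix, of u], of v] by (simp add: Delta_def)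

end

lemma bisim_coup:
  fixes R :: "('s \<times> 's) set"
  assumes eq: "equiv UNIV R"
    and pr: "\<And>E. E \<in> UNIV // R \<Longrightarrow> measure_pmf.prob \<mu> E = measure_pmf.prob \<nu> E"
  shows "\<exists>\<omega>\<in>couplings \<mu> \<nu>. set_pmf \<omega> \<subseteq> R"
proof -
  have cls: "R``{x} \<in> UNIV // R" for x by (rule quotientI) simp
  have rfl: "(x, x) \<in> R" for x using eq by (simp add: equiv_def refl_on_def)
  have ne: "set_pmf \<nu> \<inter> R``{x} \<noteq> {}" if x: "x \<in> set_pmf \<mu>" for x
  proof
    assume e: "set_pmf \<nu> \<inter> R``{x} = {}"
    have "0 < pmf \<mu> x" using x by (simp add: pmf_positive)
    also have "pmf \<mu> x = measure_pmf.prob \<mu> {x}" by (simp add: measure_pmf_single)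
    also have "\<dots> \<le> measure_pmf.prob \<mu> (R``{x})"
      using rfl by (intro measure_pmf.finite_measure_mono) auto
    also have "\<dots> = measure_pmf.prob \<nu> (R``{x})" using pr[OF cls] .
    also have "\<dots> = measure_pmf.prob \<nu> (R``{x} \<inter> set_pmf \<nu>)" by (simp add: measure_Int_set_pmf)
    also have "\<dots> = 0" using e by (simp add: Int_commute)
    finally show False by simp
  qed
  define \<omega> where "\<omega> = bind_pmf \<mu> (\<lambda>x. map_pmf (Pair x) (cond_pmf \<nu> (R``{x})))"
  have "set_pmf \<omega> \<subseteq> R" unfolding \<omega>_def using set_cond_pmf[OF ne] by auto
  moreover have "map_pmf fst \<omega> = \<mu>"
    unfolding \<omega>_def by (simp add: map_bind_pmf map_pmf_comp bind_return_pmf')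
  moreover have "map_pmf snd \<omega> = \<nu>"
  proof -
    have "map_pmf snd \<omega> = bind_pmf \<mu> (\<lambda>x. cond_pmf \<nu> (R``{x}))"
      unfolding \<omega>_def by (simp add: map_bind_pmf map_pmf_comp)
    also have "\<dots> = \<nu>"
    proof (rule pmf_eqI)
      fix y
      define c where "c = pmf \<nu> y / measure_pmf.prob \<nu> (R``{y})"
      have "pmf (bind_pmf \<mu> (\<lambda>x. cond_pmf \<nu> (R``{x}))) y
            = (\<integral>x. pmf (cond_pmf \<nu> (R``{x})) y \<partial>measure_pmf \<mu>)" by (simp add: pmf_bind)
      also have "\<dots> = (\<integral>x. indicator (R``{y}) x * c \<partial>measure_pmf \<mu>)"
      proof (intro integral_cong_AE AE_pmfI)
        fix x assume x: "x \<in> set_pmf \<mu>"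
        have pc: "pmf (cond_pmf \<nu> (R``{x})) y = (if y \<in> R``{x} then pmf \<nu> y / measure_pmf.prob \<nu> (R``{x}) else 0)"
          by (rule pmf_cond[OF ne[OF x]])
        show "pmf (cond_pmf \<nu> (R``{x})) y = indicator (R``{y}) x * c"
        proof (cases "(x, y) \<in> R")
          case True
          then have "R``{x} = R``{y}" using eq by (simp add: equiv_class_eq)
          moreover have "(y, x) \<in> R" using True eq by (meson equivE symE)
          ultimately show ?thesis using True pc rfl[of y] by (simp add: c_def)
        next
          case False
          then have "(y, x) \<notin> R" using eq by (meson equivE symE)
          then show ?thesis using False pc by simp
        qed
      qed auto
      also have "\<dots> = measure_pmf.prob \<mu> (R``{y}) * c" by simp
      also have "\<dots> = measure_pmf.prob \<nu> (R``{y}) * c" by (simp add: pr[OF cls])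
      also have "\<dots> = pmf \<nu> y"
      proof (cases "measure_pmf.prob \<nu> (R``{y}) = 0")
        case True
        have "pmf \<nu> y = measure_pmf.prob \<nu> {y}" by (simp add: measure_pmf_single)
        also have "\<dots> \<le> measure_pmf.prob \<nu> (R``{y})"
          using rfl by (intro measure_pmf.finite_measure_mono) auto
        finally show ?thesis using True pmf_nonneg[of \<nu> y] by simp
      qed (simp add: c_def)
      finally show "pmf (bind_pmf \<mu> (\<lambda>x. cond_pmf \<nu> (R``{x}))) y = pmf \<nu> y" .
    qed
    finally show ?thesis .
  qed
  ultimately show ?thesis by (auto simp: couplings_def)
qed

context lmc begin

lemma bisim_d0:
  assumes R: "prob_bisimulation \<tau> lab R" and uv: "(u, v) \<in> R"
  shows "d u v = 0"
proof -
  define e where "e = (\<lambda>a b. if (a, b) \<in> R then 0 else d a b)"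
  have be: "bnd e" using d_bnd by (auto simp: bnd_def e_def)
  have ed: "e a b \<le> d a b" for a b using d_bnd by (auto simp: bnd_def e_def)
  have "D e a b \<le> e a b" for a b
  proof (cases "(a, b) \<in> R")
    case True
    have eqR: "equiv UNIV R" and lb: "lab a = lab b"
      and pr: "\<And>E. E \<in> UNIV // R \<Longrightarrow> measure_pmf.prob (\<tau> a) E = measure_pmf.prob (\<tau> b) E"
      using R True unfolding prob_bisimulation_def by auto
    obtain \<omega> where w: "\<omega> \<in> couplings (\<tau> a) (\<tau> b)" and sw: "set_pmf \<omega> \<subseteq> R"
      using bisim_coup[OF eqR pr] by blast
    have "D e a b \<le> EE \<omega> e" by (rule Delta_le[OF be w lb])
    also have "EE \<omega> e = 0"
      using sw by (subst exp_sum[OF coup_fin[OF w] order_refl]) (auto simp: e_def intro!: sum.neutral)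
    finally show ?thesis using True by (simp add: e_def)
  next
    case False
    have "D e a b \<le> D d a b" by (rule Delta_mono[OF be d_bnd ed])
    also have "\<dots> = d a b" using d_fix by simp
    finally show ?thesis using False by (simp add: e_def)
  qed
  then have "d u v \<le> e u v" using d_least[OF be] by blast
  then show ?thesis using uv d_bnd by (auto simp: e_def bnd_def intro: antisym)
qed

end

lemma exp_pos:
  fixes f :: "'a \<Rightarrow> real"
  assumes "finite (set_pmf M)" "\<And>p. p \<in> set_pmf M \<Longrightarrow> 0 \<le> f p" "z \<in> set_pmf M" "0 < f z"
  shows "0 < measure_pmf.expectation M f"
proof -
  have "0 < f z * pmf M z" using assms by (simp add: pmf_positive)
  also have "\<dots> \<le> (\<Sum>p\<in>set_pmf M. f p * pmf M p)"
    using assms by (intro member_le_sum) auto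
  also have "\<dots> = measure_pmf.expectation M f" using exp_sum[OF assms(1) order_refl] by simp
  finally show ?thesis .
qed

lemma exp_pos_ex:
  fixes f :: "'a \<Rightarrow> real"
  assumes "finite (set_pmf M)" "0 < measure_pmf.expectation M f"
  shows "\<exists>z\<in>set_pmf M. 0 < f z"
proof (rule ccontr)
  assume "\<not> ?thesis"
  then have "(\<Sum>p\<in>set_pmf M. f p * pmf M p) \<le> 0"
    by (intro sum_nonpos) (auto simp: mult_nonpos_nonneg)
  then show False using assms exp_sum[OF assms(1) order_refl, of f] by simp
qed

locale reach =
  fixes \<tau> :: "'s::countable \<Rightarrow> 's pmf" and lab :: "'s \<Rightarrow> 'l" and T
  assumes sfin: "\<And>x. finite (set_pmf (chain_step \<tau> lab T x))"
begin

abbreviation "rw \<equiv> reach_within \<tau> lab T"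
abbreviation "st \<equiv> chain_step \<tau> lab T"

lemma rw_bnd: "0 \<le> rw Z n x \<and> rw Z n x \<le> 1"
proof (induction n arbitrary: x)
  case (Suc n)
  have "measure_pmf.expectation (st x) (rw Z n) \<le> measure_pmf.expectation (st x) (\<lambda>_. 1::real)"
    using Suc by (intro integral_mono integrable_measure_pmf_finite sfin) auto
  moreover have "0 \<le> measure_pmf.expectation (st x) (rw Z n)"
    using Suc by (intro integral_nonneg_AE) auto
  ultimately show ?case by simp
qed simp

lemma rw_Suc: "rw Z n x \<le> rw Z (Suc n) x"
proof (induction n arbitrary: x)
  case 0
  then show ?case using rw_bnd[of Z "Suc 0" x] by simp
next
  case (Suc n)
  have "measure_pmf.expectation (st x) (rw Z n) \<le> measure_pmf.expectation (st x) (rw Z (Suc n))"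
    using Suc by (intro integral_mono integrable_measure_pmf_finite sfin) auto
  then show ?case by simp
qed

lemma rw_mono: "n \<le> m \<Longrightarrow> rw Z n x \<le> rw Z m x"
  using lift_Suc_mono_le[of "\<lambda>n. rw Z n x"] rw_Suc by blast

lemma rw_le_reach: "rw Z n x \<le> reach_prob \<tau> lab T x Z"
  unfolding reach_prob_def
proof (rule cSUP_upper)
  show "bdd_above (range (\<lambda>n. rw Z n x))" by (rule bdd_aboveI2[where M=1]) (use rw_bnd in blast)
qed simp

lemma reach_pos: "reach_prob \<tau> lab T x Z > 0 \<Longrightarrow> \<exists>n. rw Z n x > 0"
proof (rule ccontr)
  assume a: "reach_prob \<tau> lab T x Z > 0" "\<not> (\<exists>n. rw Z n x > 0)"
  then have "reach_prob \<tau> lab T x Z \<le> 0" unfolding reach_prob_def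
    by (intro cSUP_least) (auto simp: not_less)
  then show False using a by simp
qed

lemma rw_base: "y \<in> set_pmf (st x) \<Longrightarrow> rw {y} (Suc 0) x > 0"
  by (auto intro!: exp_pos[OF sfin])

lemma rw_step: "rw {x} n x0 > 0 \<Longrightarrow> y \<in> set_pmf (st x) \<Longrightarrow> rw {y} (Suc n) x0 > 0"
proof (induction n arbitrary: x0)
  case 0
  then have "x0 = x" by (simp split: if_splits)
  then show ?case using rw_base[OF 0(2)] by simp
next
  case (Suc n)
  show ?case
  proof (cases "x0 = x")
    case True
    then show ?thesis using rw_base[OF Suc(3)] rw_mono[of "Suc 0" "Suc (Suc n)" "{y}" x] by simp
  next
    case False
    then have "0 < measure_pmf.expectation (st x0) (rw {x} n)" using Suc(2) by simp
    then obtain z where z: "z \<in> set_pmf (st x0)" "0 < rw {x} n z" using exp_pos_ex[OF sfin] by blast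
    have "0 < rw {y} (Suc n) z" using Suc.IH[OF z(2) Suc(3)] .
    then have "0 < measure_pmf.expectation (st x0) (rw {y} (Suc n))"
      using z rw_bnd by (intro exp_pos[OF sfin]) auto
    then show ?thesis by simp
  qed
qed

lemma reach_step:
  assumes "reach_prob \<tau> lab T x0 {x} > 0" "y \<in> set_pmf (st x)"
  shows "reach_prob \<tau> lab T x0 {y} > 0"
proof -
  obtain n where "rw {x} n x0 > 0" using reach_pos[OF assms(1)] by blast
  then have "rw {y} (Suc n) x0 > 0" using rw_step assms(2) by blast
  then show ?thesis using rw_le_reach[of "{y}" "Suc n" x0] by simp
qed

lemma reach_self: "reach_prob \<tau> lab T x {x} > 0"
  using rw_le_reach[of "{x}" 0 x] by simp

end

theorem mainTheorem11:
  fixes L :: "'l set" and \<tau> :: "'s::countable \<Rightarrow> 's pmf" and lab :: "'s \<Rightarrow> 'l"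
    and s t :: 's
  assumes "is_LMC L \<tau> lab"
    and "bisim_dist \<tau> lab s t < 1"
  shows "\<exists>T. is_policy \<tau> lab T \<and>
           (\<forall>\<epsilon>>0. \<exists>u v. bisim_dist \<tau> lab u v \<le> \<epsilon> \<and> reach_prob \<tau> lab T (s, t) {(u, v)} > 0)"
proof -
  interpret lmc \<tau> lab using assms(1) by unfold_locales (simp add: is_LMC_def)
  define T where "T = (\<lambda>x. if x \<in> unknown_pairs \<tau> lab
     then (SOME \<omega>. \<omega> \<in> couplings (\<tau> (fst x)) (\<tau> (snd x)) \<and> D d (fst x) (snd x) = EE \<omega> d)
     else return_pmf x)"
  have Tprop: "T x \<in> couplings (\<tau> (fst x)) (\<tau> (snd x)) \<and> D d (fst x) (snd x) = EE (T x) d"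
    if x: "x \<in> unknown_pairs \<tau> lab" for x
  proof -
    have "lab (fst x) = lab (snd x)" using x by (auto simp: unknown_pairs_def)
    then have "\<exists>\<omega>. \<omega> \<in> couplings (\<tau> (fst x)) (\<tau> (snd x)) \<and> D d (fst x) (snd x) = EE \<omega> d"
      using Delta_attain[OF d_bnd] by blast
    then show ?thesis using x unfolding T_def by (simp only: if_True) (rule someI_ex)
  qed
  have sfin: "finite (set_pmf (chain_step \<tau> lab T x))" for x
    using Tprop[of x] coup_fin by (auto simp: chain_step_def T_def)
  interpret reach \<tau> lab T by unfold_locales (rule sfin)
  have pol: "is_policy \<tau> lab T" unfolding is_policy_def using Tprop by auto
  have "\<exists>u v. d u v \<le> \<epsilon> \<and> reach_prob \<tau> lab T (s, t) {(u, v)} > 0" if \<epsilon>: "\<epsilon> > 0" for \<epsilon>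
  proof (rule ccontr)
    assume "\<not> ?thesis"
    then have big: "\<And>u v. reach_prob \<tau> lab T (s, t) {(u, v)} > 0 \<Longrightarrow> d u v > \<epsilon>"
      by (auto simp: not_le)
    define Rc where "Rc = {z. reach_prob \<tau> lab T (s, t) {z} > 0}"
    have stR: "(s, t) \<in> Rc" unfolding Rc_def using reach_self by simp
    have bigR: "z \<in> Rc \<Longrightarrow> d (fst z) (snd z) > \<epsilon>" for z using big[of "fst z" "snd z"] by (auto simp: Rc_def)
    have clos: "z \<in> Rc \<Longrightarrow> y \<in> set_pmf (st z) \<Longrightarrow> y \<in> Rc" for z y
      unfolding Rc_def using reach_step by blast
    have dst: "\<epsilon> < d s t" using bigR[OF stR] by simp
    have e1: "\<epsilon> < 1" using dst assms(2) by simp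
    have d01: "0 \<le> d u v" "d u v \<le> 1" for u v using d_bnd by (auto simp: bnd_def)
    define e where "e = (\<lambda>u v. if (u, v) \<in> Rc then (d u v - \<epsilon>) / (1 - \<epsilon>) else d u v)"
    have be: "bnd e" unfolding bnd_def e_def
    proof (intro allI conjI)
      fix u v
      show "0 \<le> (if (u, v) \<in> Rc then (d u v - \<epsilon>) / (1 - \<epsilon>) else d u v)"
        using bigR[of "(u, v)"] e1 d01[of u v] by auto
      show "(if (u, v) \<in> Rc then (d u v - \<epsilon>) / (1 - \<epsilon>) else d u v) \<le> 1"
        using e1 d01[of u v] by (auto simp: field_simps)
    qed
    have ed: "e u v \<le> d u v" for u v
    proof -
      have "d u v - \<epsilon> \<le> d u v * (1 - \<epsilon>)" using d01[of u v] \<epsilon> by (simp add: algebra_simps mult_left_le)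
      then show ?thesis using e1 by (simp add: e_def pos_divide_le_eq)
    qed
    have pre: "D e a b \<le> e a b" for a b
    proof (cases "lab a = lab b")
      case False
      then have "d a b = 1" by (rule d_lab)
      then show ?thesis using False e1 by (simp add: Delta_def e_def)
    next
      case lb: True
      show ?thesis
      proof (cases "(a, b) \<in> Rc")
        case False
        have "D e a b \<le> D d a b" by (rule Delta_mono[OF be d_bnd ed])
        also have "\<dots> = d a b" using d_fix by simp
        finally show ?thesis using False by (simp add: e_def)
      next
        case inR: True
        have "\<not> bisimilar \<tau> lab a b"
        proof
          assume "bisimilar \<tau> lab a b"
          then have "d a b = 0" using bisim_d0 by (auto simp: bisimilar_def)
          then show False using bigR[OF inR] \<epsilon> by simp
        qed
        then have unk: "(a, b) \<in> unknown_pairs \<tau> lab" using lb by (simp add: unknown_pairs_def)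
        define \<omega> where "\<omega> = T (a, b)"
        have w: "\<omega> \<in> couplings (\<tau> a) (\<tau> b)" and dw: "d a b = EE \<omega> d"
          using Tprop[OF unk] d_fix unfolding \<omega>_def by auto
        have sw: "set_pmf \<omega> \<subseteq> Rc" using clos[OF inR] unk by (auto simp: \<omega>_def chain_step_def)
        let ?S = "set_pmf \<omega>"
        have fS: "finite ?S" using coup_fin[OF w] .
        have "D e a b \<le> EE \<omega> e" by (rule Delta_le[OF be w lb])
        also have "EE \<omega> e = (\<Sum>p\<in>?S. ((d (fst p) (snd p) - \<epsilon>) / (1 - \<epsilon>)) * pmf \<omega> p)"
          using sw by (subst exp_sum[OF fS order_refl]) (auto simp: e_def split_beta intro!: sum.cong)
        also have "\<dots> = ((\<Sum>p\<in>?S. d (fst p) (snd p) * pmf \<omega> p) - \<epsilon> * (\<Sum>p\<in>?S. pmf \<omega> p)) / (1 - \<epsilon>)"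
          by (simp add: sum_divide_distrib sum_subtractf sum_distrib_left algebra_simps diff_divide_distrib)
        also have "(\<Sum>p\<in>?S. pmf \<omega> p) = 1" using fS by (simp add: sum_pmf_eq_1)
        also have "(\<Sum>p\<in>?S. d (fst p) (snd p) * pmf \<omega> p) = d a b"
        proof -
          have "EE \<omega> d = (\<Sum>p\<in>?S. d (fst p) (snd p) * pmf \<omega> p)"
            by (subst exp_sum[OF fS order_refl]) (simp add: split_beta)
          then show ?thesis using dw by simp
        qed
        finally show ?thesis using inR by (simp add: e_def)
      qed
    qed
    have "d s t \<le> e s t" using d_least[OF be pre] .
    also have "e s t = (d s t - \<epsilon>) / (1 - \<epsilon>)" using stR by (simp add: e_def)
    finally have "d s t * (1 - \<epsilon>) \<le> d s t - \<epsilon>" using e1 by (simp add: le_divide_eq)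
    then show False using \<epsilon> assms(2) by (simp add: algebra_simps)
  qed
  then show ?thesis using pol by blast
qed

end
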